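(* For all $n\ge2$ and all $x,y\in\mathbb{B}^n$, $$\frac{1}{\sqrt2}\,\mathrm{th}\frac{\rho_{\mathbb{B}^n}(x,y)}{2}\le b_{\mathbb{B}^n,2}(x,y)\le\sqrt2\,\mathrm{th}\frac{\rho_{\mathbb{B}^n}(x,y)}{2},$$ and the constants $1/\sqrt2$ and $\sqrt2$ are the best possible.
   Context: $\mathbb{B}^n$ is the unit ball of $\mathbb{R}^n$. The hyperbolic metric of the unit ball satisfies $\mathrm{th}\frac{\rho_{\mathbb{B}^n}(x,y)}{2}=\frac{|x-y|}{\sqrt{|x-y|^2+(1-|x|^2)(1-|y|^2)}}$. For a domain $G\subsetneq\mathbb{R}^n$ and $p\ge1$, the Barrlund metric is $b_{G,p}(x,y)=\sup_{z\in\partial G}\frac{|x-y|}{(|x-z|^p+|z-y|^p)^{1/p}}$. *)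

theory Defs
  imports "HOL-Analysis.Analysis"
begin

text \<open>Hyperbolic metric of the unit ball, defined through the identity
  th(rho(x,y)/2) = |x-y| / sqrt(|x-y|^2 + (1-|x|^2)(1-|y|^2)).\<close>
definition hyp_ball :: "'a::real_normed_vector \<Rightarrow> 'a \<Rightarrow> real" where
  "hyp_ball x y = 2 * artanh (norm (x - y) /
      sqrt ((norm (x - y))\<^sup>2 + (1 - (norm x)\<^sup>2) * (1 - (norm y)\<^sup>2)))"

definition barrlund :: "'a::real_normed_vector set \<Rightarrow> real \<Rightarrow> 'a \<Rightarrow> 'a \<Rightarrow> real" where
  "barrlund G p x y = (SUP z\<in>frontier G.
      norm (x - y) / ((norm (x - z) powr p + norm (z - y) powr p) powr (1 / p)))"

end

theory Submission
  imports Defs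
begin

lemma tanh_artanh_real:
  fixes t :: real assumes "-1 < t" "t < 1"
  shows "tanh (artanh t) = t"
proof -
  have e: "exp (- 2 * artanh t) = (1 - t) / (1 + t)"
  proof -
    have "- 2 * artanh t = ln ((1 - t) / (1 + t))"
      using assms by (simp add: artanh_def ln_div)
    thus ?thesis using assms by simp
  qed
  show ?thesis using assms unfolding tanh_real_altdef e
    by (simp add: field_simps)
qed

lemma real_ineqs:
  fixes a b s w D1 D2 :: real
  assumes a: "0 \<le> a" "a < 1" and b: "0 \<le> b" "b < 1" and s: "0 \<le> s" "s \<le> a + b"
    and sw: "s^2 = a^2 + b^2 + 2 * w"
    and D1_def: "D1 = a^2 + b^2 - 2 * w + (1 - a^2) * (1 - b^2)"
    and D2_def: "D2 = a^2 + b^2 + 2 - 2 * s"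
  shows "D1 \<le> 2 * D2" "D2 \<le> 2 * D1"
proof -
  have w: "2 * w = s^2 - a^2 - b^2" using sw by simp
  have D1: "D1 = 1 + a^2 + b^2 - s^2 + a^2 * b^2" unfolding D1_def using w by (simp add: algebra_simps)
  have am: "(1 - a^2) * (1 - b^2) \<le> (1 - (a^2+b^2)/2)^2"
    using sum_squares_ge_zero[of "a^2 - b^2" 0] by (simp add: power2_eq_square algebra_simps)
  have "a + b \<le> 1 + (a^2+b^2)/2" using sum_squares_ge_zero[of "a-1" "b-1"]
    by (simp add: power2_eq_square algebra_simps field_simps)
  hence le: "1 - (a^2+b^2)/2 \<le> 2 - s" using s by simp
  have a2: "a^2 < 1" "b^2 < 1" using a b by (simp_all add: abs_square_less_1)
  have "(1 - (a^2+b^2)/2)^2 \<le> (2 - s)^2"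
    using le a2 by (intro power_mono) auto
  with am have "(1 - a^2) * (1 - b^2) \<le> (2 - s)^2" by linarith
  thus "D1 \<le> 2 * D2" unfolding D1 D2_def by (simp add: power2_eq_square algebra_simps)
  define u where "u = 1 - a"
  define v where "v = 1 - b"
  have uv: "0 < u" "u \<le> 1" "0 < v" "v \<le> 1" using a b by (auto simp: u_def v_def)
  have F0: "0 \<le> (u-v)^2 + 2 * u * v * ((1-u) * (1-v) + (2-u-v))"
    using uv by (intro add_nonneg_nonneg) (auto intro!: mult_nonneg_nonneg)
  have F: "2 * (a+b) * (a+b-1) \<le> a^2+b^2+2 * a^2 * b^2"
  proof -
    have "a^2+b^2+2 * a^2 * b^2 - 2 * (a+b) * (a+b-1) = (u-v)^2 + 2 * u * v * ((1-u) * (1-v) + (2-u-v))"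
      unfolding u_def v_def by (simp add: power2_eq_square algebra_simps)
    then show ?thesis using F0 by linarith
  qed
  have G: "2 * s * (s-1) \<le> a^2+b^2+2 * a^2 * b^2"
  proof (cases "s \<le> 1")
    case True
    hence "2 * s * (s-1) \<le> 0" using s by (simp add: mult_nonneg_nonpos)
    thus ?thesis by (smt (verit) zero_le_power2 mult_nonneg_nonneg)
  next
    case False
    have "s * (s-1) \<le> (a+b) * (a+b-1)" using False s by (intro mult_mono) auto
    thus ?thesis using F by linarith
  qed
  show "D2 \<le> 2 * D1" unfolding D1 D2_def using G by (simp add: power2_eq_square algebra_simps)
qed

lemma barr_eq:
  fixes x y :: "real^'n"
  assumes x: "norm x < 1" and y: "norm y < 1"
  shows "barrlund (ball 0 1) 2 x y = norm (x - y) / sqrt (norm x ^ 2 + norm y ^ 2 + 2 - 2 * norm (x + y))"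
    and "0 < norm x ^ 2 + norm y ^ 2 + 2 - 2 * norm (x + y)"
proof -
  define D2 where "D2 = norm x ^ 2 + norm y ^ 2 + 2 - 2 * norm (x + y)"
  have tri: "norm (x + y) \<le> norm x + norm y" by (rule norm_triangle_ineq)
  have "D2 \<ge> (1 - norm x)^2 + (1 - norm y)^2"
    unfolding D2_def using tri by (simp add: power2_eq_square algebra_simps)
  moreover have "(1 - norm x)^2 > 0" using x by simp
  ultimately have D2pos: "D2 > 0" by (smt (verit) zero_le_power2)
  then show "0 < norm x ^ 2 + norm y ^ 2 + 2 - 2 * norm (x + y)" by (simp add: D2_def)
  define g where "g z = norm (x - z) ^ 2 + norm (z - y) ^ 2" for z :: "real^'n"
  have key: "g z = norm x ^ 2 + norm y ^ 2 + 2 - 2 * inner z (x + y)" if "norm z = 1" for z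
  proof -
    have "inner z z = 1" using that by (metis power2_norm_eq_inner one_power2)
    thus ?thesis unfolding g_def
      by (simp add: power2_norm_eq_inner inner_diff_left inner_diff_right inner_add_right inner_commute algebra_simps)
  qed
  have gge: "D2 \<le> g z" if "norm z = 1" for z
  proof -
    have "inner z (x + y) \<le> norm z * norm (x + y)" by (rule norm_cauchy_schwarz)
    thus ?thesis using key[OF that] that unfolding D2_def by simp
  qed
  define f where "f z = norm (x - y) / ((norm (x - z) powr 2 + norm (z - y) powr 2) powr (1 / 2))" for z :: "real^'n"
  have feq: "f z = norm (x - y) / sqrt (g z)" for z
    unfolding f_def g_def by (simp add: powr_numeral powr_half_sqrt)
  define z0 :: "real^'n" where "z0 = (if x + y = 0 then axis undefined 1 else (1 / norm (x + y)) *\<^sub>R (x + y))"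
  have z0n: "norm z0 = 1" unfolding z0_def by (simp add: norm_axis_1)
  have gz0: "g z0 = D2"
  proof -
    have "inner z0 (x + y) = norm (x + y)"
    proof (cases "x + y = 0")
      case True then show ?thesis unfolding z0_def by simp
    next
      case False then show ?thesis unfolding z0_def
        by (simp add: power2_norm_eq_inner[symmetric] power2_eq_square)
    qed
    then show ?thesis using key[OF z0n] unfolding D2_def by simp
  qed
  have "barrlund (ball 0 1) 2 x y = Sup (f ` sphere 0 1)"
    unfolding barrlund_def f_def by (simp add: frontier_ball)
  also have "\<dots> = f z0"
  proof (rule cSup_eq_maximum)
    show "f z0 \<in> f ` sphere 0 1" using z0n by simp
    fix v assume "v \<in> f ` sphere 0 1"
    then obtain z where z: "norm z = 1" "v = f z" by auto
    have "sqrt D2 \<le> sqrt (g z)" using gge[OF z(1)] by simp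
    moreover have "0 < sqrt D2" using D2pos by simp
    ultimately show "v \<le> f z0" unfolding z(2) feq gz0
      by (intro divide_left_mono) (auto intro: mult_pos_pos)
  qed
  also have "\<dots> = norm (x - y) / sqrt D2" unfolding feq gz0 ..
  finally show "barrlund (ball 0 1) 2 x y = norm (x - y) / sqrt (norm x ^ 2 + norm y ^ 2 + 2 - 2 * norm (x + y))"
    unfolding D2_def .
qed

lemma tanh_hyp:
  fixes x y :: "'a::real_inner"
  assumes x: "norm x < 1" and y: "norm y < 1"
  shows "tanh (hyp_ball x y / 2) = norm (x - y) / sqrt (norm (x - y) ^ 2 + (1 - norm x ^ 2) * (1 - norm y ^ 2))"
    and "0 < norm (x - y) ^ 2 + (1 - norm x ^ 2) * (1 - norm y ^ 2)"
proof -
  have K: "0 < (1 - norm x ^ 2) * (1 - norm y ^ 2)"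
    using x y by (intro mult_pos_pos) (simp_all add: abs_square_less_1)
  then show pos: "0 < norm (x - y) ^ 2 + (1 - norm x ^ 2) * (1 - norm y ^ 2)"
    by (smt (verit) zero_le_power2)
  define T where "T = norm (x - y) / sqrt (norm (x - y) ^ 2 + (1 - norm x ^ 2) * (1 - norm y ^ 2))"
  have T0: "0 \<le> T" unfolding T_def using pos by (intro divide_nonneg_nonneg) auto
  have "sqrt (norm (x - y) ^ 2) < sqrt (norm (x - y) ^ 2 + (1 - norm x ^ 2) * (1 - norm y ^ 2))"
    using K by (subst real_sqrt_less_iff) linarith
  hence "norm (x - y) < sqrt (norm (x - y) ^ 2 + (1 - norm x ^ 2) * (1 - norm y ^ 2))" by simp
  hence T1: "T < 1" unfolding T_def using pos by simp
  have "hyp_ball x y / 2 = artanh T" unfolding hyp_ball_def T_def by simp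
  then show "tanh (hyp_ball x y / 2) = norm (x - y) / sqrt (norm (x - y) ^ 2 + (1 - norm x ^ 2) * (1 - norm y ^ 2))"
    using tanh_artanh_real[of T] T0 T1 unfolding T_def by simp
qed


lemma L1: fixes d A B :: real assumes "0 \<le> d" "0 < A" "0 < B" "B \<le> 2 * A"
  shows "(1 / sqrt 2) * (d / sqrt A) \<le> d / sqrt B"
proof -
  have "(1 / sqrt 2) * (d / sqrt A) = d / sqrt (2 * A)" by (simp add: real_sqrt_mult)
  also have "\<dots> \<le> d / sqrt B" using assms by (intro divide_left_mono) (auto intro: mult_pos_pos)
  finally show ?thesis .
qed

lemma L2: fixes d A B :: real assumes "0 \<le> d" "0 < A" "0 < B" "A \<le> 2 * B"
  shows "d / sqrt B \<le> sqrt 2 * (d / sqrt A)"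
proof -
  have "d / sqrt B \<le> d / sqrt (A / 2)" using assms by (intro divide_left_mono) (auto intro: mult_pos_pos)
  also have "\<dots> = sqrt 2 * (d / sqrt A)" by (simp add: real_sqrt_divide)
  finally show ?thesis .
qed

lemma L3: fixes d A B c :: real assumes "0 < d" "0 < A" "0 < B" "0 < c" "A < c^2 * B"
  shows "d / sqrt B < c * (d / sqrt A)"
proof -
  have "A / c^2 < B" using assms by (simp add: field_simps)
  hence "d / sqrt B < d / sqrt (A / c^2)" using assms
    by (intro divide_strict_left_mono) (auto intro: mult_pos_pos)
  also have "\<dots> = c * (d / sqrt A)" using assms by (simp add: real_sqrt_divide)
  finally show ?thesis .
qed

lemma L4: fixes d A B C :: real assumes "0 < d" "0 < A" "0 < B" "C \<le> 0 \<or> C^2 * B < A"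
  shows "C * (d / sqrt A) < d / sqrt B"
proof (cases "C \<le> 0")
  case True
  have "C * (d / sqrt A) \<le> 0" by (intro mult_nonpos_nonneg) (use True assms in auto)
  also have "0 < d / sqrt B" using assms by simp
  finally show ?thesis .
next
  case False
  hence C: "0 < C" "C^2 * B < A" using assms by auto
  have "B < A / C^2" using C by (simp add: field_simps)
  hence "C * (d / sqrt A) = d / sqrt (A / C^2)" using C by (simp add: real_sqrt_divide)
  also have "\<dots> < d / sqrt B" using assms `B < A / C^2`
    by (intro divide_strict_left_mono) (auto intro: mult_pos_pos)
  finally show ?thesis .
qed

lemma part1:
  fixes x y :: "real^'n"
  assumes x: "norm x < 1" and y: "norm y < 1"
  shows "(1 / sqrt 2) * tanh (hyp_ball x y / 2) \<le> barrlund (ball 0 1) 2 x y \<and>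
         barrlund (ball 0 1) 2 x y \<le> sqrt 2 * tanh (hyp_ball x y / 2)"
proof -
  define D1 where "D1 = norm (x - y) ^ 2 + (1 - norm x ^ 2) * (1 - norm y ^ 2)"
  define D2 where "D2 = norm x ^ 2 + norm y ^ 2 + 2 - 2 * norm (x + y)"
  have T: "tanh (hyp_ball x y / 2) = norm (x - y) / sqrt D1" and D1: "0 < D1"
    using tanh_hyp[OF x y] unfolding D1_def by auto
  have B: "barrlund (ball 0 1) 2 x y = norm (x - y) / sqrt D2" and D2: "0 < D2"
    using barr_eq[OF x y] unfolding D2_def by auto
  have e1: "norm (x + y) ^ 2 = norm x ^ 2 + norm y ^ 2 + 2 * inner x y"
    unfolding power2_norm_eq_inner by (simp add: inner_add_left inner_add_right inner_commute)
  have e2: "norm (x - y) ^ 2 = norm x ^ 2 + norm y ^ 2 - 2 * inner x y"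
    unfolding power2_norm_eq_inner by (simp add: inner_diff_left inner_diff_right inner_commute)
  have ri: "D1 \<le> 2 * D2" "D2 \<le> 2 * D1"
    using real_ineqs[of "norm x" "norm y" "norm (x + y)" "inner x y" D1 D2] x y
      norm_triangle_ineq[of x y] e1 e2 unfolding D1_def D2_def by auto
  show ?thesis unfolding T B using L1[OF _ D1 D2 ri(2)] L2[OF _ D1 D2 ri(1)] by simp
qed

lemma two_idx: "\<exists>i j::'n::finite. i \<noteq> j" if "CARD('n) \<ge> 2"
proof (rule ccontr)
  assume "\<not> ?thesis"
  hence "UNIV = {undefined::'n}" by auto
  hence "card (UNIV::'n set) = card {undefined::'n}" by (rule arg_cong)
  with that show False by simp
qed

theorem corollary3p6:
  assumes "CARD('n) \<ge> 2"
  shows "(\<forall>x\<in>ball (0::real^'n) 1. \<forall>y\<in>ball 0 1.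
            (1 / sqrt 2) * tanh (hyp_ball x y / 2) \<le> barrlund (ball 0 1) 2 x y \<and>
            barrlund (ball 0 1) 2 x y \<le> sqrt 2 * tanh (hyp_ball x y / 2))
       \<and> (\<forall>c > 1 / sqrt 2. \<exists>x\<in>ball (0::real^'n) 1. \<exists>y\<in>ball 0 1.
            barrlund (ball 0 1) 2 x y < c * tanh (hyp_ball x y / 2))
       \<and> (\<forall>C < sqrt 2. \<exists>x\<in>ball (0::real^'n) 1. \<exists>y\<in>ball 0 1.
            C * tanh (hyp_ball x y / 2) < barrlund (ball 0 1) 2 x y)"
proof (intro conjI allI impI ballI)
  fix x y :: "real^'n" assume "x \<in> ball 0 1" "y \<in> ball 0 1"
  then have "norm x < 1" "norm y < 1" by auto
  from part1[OF this] show "(1 / sqrt 2) * tanh (hyp_ball x y / 2) \<le> barrlund (ball 0 1) 2 x y"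
    "barrlund (ball 0 1) 2 x y \<le> sqrt 2 * tanh (hyp_ball x y / 2)" by auto
next
  fix c :: real assume c: "c > 1 / sqrt 2"
  have c0: "0 < c" using c by (smt (verit) divide_pos_pos real_sqrt_gt_zero)
  have "(1 / sqrt 2)^2 < c^2" using c by (intro power_strict_mono) auto
  hence c2: "1/2 < c^2" by (simp add: power_divide)
  define t where "t = (2 - 1 / c^2) / 4"
  have t: "0 < t" "t < 1/2" using c2 c0 unfolding t_def by (auto simp: field_simps)
  define y :: "real^'n" where "y = t *\<^sub>R axis undefined 1"
  have ny: "norm y = t" using t unfolding y_def by (simp add: norm_axis_1)
  have x0: "(0::real^'n) \<in> ball 0 1" by simp
  have yb: "y \<in> ball 0 1" using ny t by simp
  have Tv: "tanh (hyp_ball 0 y / 2) = t / sqrt (t^2 + (1 - 0^2) * (1 - t^2))"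
    using tanh_hyp(1)[of "0::real^'n" y] ny t by simp
  have Bv: "barrlund (ball 0 1) 2 0 y = t / sqrt (0^2 + t^2 + 2 - 2 * t)"
    using barr_eq(1)[of "0::real^'n" y] ny t by simp
  have Bp: "0 < 0^2 + t^2 + 2 - 2 * t" using barr_eq(2)[of "0::real^'n" y] ny t by simp
  have "c^2 * (2 - 2 * t) = c^2 + 1/2" using c0 unfolding t_def by (simp add: field_simps)
  moreover have "0 \<le> c^2 * t^2" by simp
  moreover have "t^2 + (1 - 0^2) * (1 - t^2) = (1::real)" by simp
  moreover have "c^2 * (0^2 + t^2 + 2 - 2 * t) = c^2 * t^2 + c^2 * (2 - 2 * t)" by (simp add: algebra_simps)
  ultimately have lt: "t^2 + (1 - 0^2) * (1 - t^2) < c^2 * (0^2 + t^2 + 2 - 2 * t)"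
    using c2 by linarith
  have "barrlund (ball 0 1) 2 0 y < c * tanh (hyp_ball 0 y / 2)"
    unfolding Tv Bv by (rule L3) (use t Bp lt c0 in auto)
  then show "\<exists>x\<in>ball (0::real^'n) 1. \<exists>y\<in>ball 0 1. barrlund (ball 0 1) 2 x y < c * tanh (hyp_ball x y / 2)"
    using x0 yb by blast
next
  fix C :: real assume C: "C < sqrt 2"
  obtain i j :: 'n where ij: "i \<noteq> j" using two_idx[OF assms] by blast
  define t where "t = max 0 (C / sqrt 2)"
  have t: "0 \<le> t" "t < 1" using C unfolding t_def by (auto simp: field_simps)
  define r where "r = (1 - t) / 2"
  have r: "0 < r" using t unfolding r_def by simp
  define x :: "real^'n" where "x = t *\<^sub>R axis i 1 + r *\<^sub>R axis j 1"
  define y :: "real^'n" where "y = t *\<^sub>R axis i 1 - r *\<^sub>R axis j 1"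
  have nx: "norm x ^ 2 = t^2 + r^2" unfolding x_def power2_norm_eq_inner using ij
    by (simp add: inner_add_left inner_add_right inner_axis_axis power2_eq_square)
  have ny: "norm y ^ 2 = t^2 + r^2" unfolding y_def power2_norm_eq_inner using ij
    by (simp add: inner_diff_left inner_diff_right inner_axis_axis power2_eq_square)
  have "x + y = (t + t) *\<^sub>R axis i 1" unfolding x_def y_def scaleR_add_left by simp
  hence nxy: "norm (x + y) = 2 * t" using t by (simp add: norm_axis_1)
  have "x - y = (r + r) *\<^sub>R axis j 1" unfolding x_def y_def scaleR_add_left by simp
  hence nmy: "norm (x - y) = 2 * r" using r by (simp add: norm_axis_1)
  have "t^2 + r^2 < 1"
  proof -
    have "t^2 + r^2 \<le> (t + r)^2" using t r by (simp add: power2_eq_square algebra_simps)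
    also have "(t + r)^2 < 1"
    proof -
      have "0 \<le> t + r" "t + r < 1" using t r unfolding r_def by (auto simp: field_simps)
      thus ?thesis by (simp add: abs_square_less_1)
    qed
    finally show ?thesis .
  qed
  hence "norm x ^ 2 < 1" "norm y ^ 2 < 1" using nx ny by simp_all
  hence lt1: "norm x < 1" "norm y < 1" using abs_square_less_1[of "norm x"] abs_square_less_1[of "norm y"] by simp_all
  define P where "P = 1 + t^2 + r^2"
  define D1 where "D1 = norm (x - y) ^ 2 + (1 - norm x ^ 2) * (1 - norm y ^ 2)"
  define D2 where "D2 = norm x ^ 2 + norm y ^ 2 + 2 - 2 * norm (x + y)"
  have T: "tanh (hyp_ball x y / 2) = norm (x - y) / sqrt D1" and D1: "0 < D1"
    using tanh_hyp[OF lt1] unfolding D1_def by auto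
  have B: "barrlund (ball 0 1) 2 x y = norm (x - y) / sqrt D2" and D2: "0 < D2"
    using barr_eq[OF lt1] unfolding D2_def by auto
  have D1e: "D1 = (P - 2 * t) * (P + 2 * t)" unfolding D1_def P_def nmy nx ny
    by (simp add: power2_eq_square algebra_simps)
  have D2e: "D2 = 2 * (P - 2 * t)" unfolding D2_def P_def nxy nx ny
    by (simp add: power2_eq_square algebra_simps)
  have Pm: "0 < P - 2 * t" using D2 D2e by simp
  have "C \<le> 0 \<or> C^2 * D2 < D1"
  proof (cases "C \<le> 0")
    case False
    hence tC: "t = C / sqrt 2" unfolding t_def by simp
    hence C2: "C^2 = 2 * t^2" by (simp add: power_divide)
    have h: "P + 2 * t - 2 * C^2 = (1 - t) * (1 + 3 * t) + r^2"
      unfolding C2 P_def by (simp add: algebra_simps power2_eq_square)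
    have "0 < (1 - t) * (1 + 3 * t)" using t by (intro mult_pos_pos) auto
    hence hp: "0 < P + 2 * t - 2 * C^2" unfolding h by (simp add: add_pos_nonneg)
    have "D1 - C^2 * D2 = (P - 2 * t) * (P + 2 * t - 2 * C^2)"
      unfolding D1e D2e by (simp add: algebra_simps)
    moreover have "0 < (P - 2 * t) * (P + 2 * t - 2 * C^2)" using Pm hp by (rule mult_pos_pos)
    ultimately have "C^2 * D2 < D1" by linarith
    then show ?thesis by simp
  qed simp
  hence "C * tanh (hyp_ball x y / 2) < barrlund (ball 0 1) 2 x y"
    unfolding T B using L4[OF _ D1 D2] nmy r by simp
  then show "\<exists>x\<in>ball (0::real^'n) 1. \<exists>y\<in>ball 0 1. C * tanh (hyp_ball x y / 2) < barrlund (ball 0 1) 2 x y"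
    using lt1 by (intro bexI[of _ x] bexI[of _ y]) auto
qed

end
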